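(* Assume the standing hypotheses of the context. Let $u$ be an extremal, i.e. an admissible function satisfying the regularity hypotheses (R) and, for each $k=1,\dots,N$ and all $t\in\Delta_n$, the Euler–Lagrange equations $$\sum_{i=1}^n\Big[-A^{\alpha_i}_{P^{1*}_{t_i}}\big(\partial_{v_{k,i}}F\{u\}\big)(t)+K^{\beta_i}_{P^{2*}_{t_i}}\big(\partial_{w_{k,i}}F\{u\}\big)(t)\Big]+\partial_{x_k}F\{u\}(t)=0.$$ Let $\xi$, $\hat\xi(t)=\xi(t,u(t))$ and the family $\bar u_\varepsilon=u+\varepsilon\hat\xi+r_\varepsilon$ be as in the context, and suppose $\mathcal{J}$ is invariant along this family, i.e. for every $\varepsilon$ near $0$ and every subrectangle $\Delta_n^*\subseteq\Delta_n$, $\int_{\Delta_n^*}F\{u\}\,dt=\int_{\Delta_n^*}F\{\bar u_\varepsilon\}\,dt$. Then for all $t\in\Delta_n$, $$\sum_{k=1}^N\sum_{i=1}^n\Big[\mathrm{D}^{\alpha_i}_{P^1_{t_i}}\big[\hat\xi_k,\partial_{v_{k,i}}F\{u\}\big](t)+\mathrm{I}^{\beta_i}_{P^2_{t_i}}\big[\hat\xi_k,\partial_{w_{k,i}}F\{u\}\big](t)\Big]=0.$$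
   Context: Fix $n,N\in\mathbb{N}$, real numbers $a_i<b_i$, $\Delta_n=(a_1,b_1)\times\cdots\times(a_n,b_n)$ with closure $\bar\Delta_n$, $t=(t_1,\dots,t_n)$, $dt=dt_n\cdots dt_1$. For each order $\gamma\in(0,1)$ a kernel $k_\gamma$ is given, a difference kernel: $k_\gamma(s,\tau)=k_\gamma(s-\tau)$. A parameter set is $P_{t_i}=\langle a_i,t_i,b_i,p_i,q_i\rangle$ ($p_i,q_i\in\mathbb{R}$), with dual $P^*_{t_i}=\langle a_i,t_i,b_i,q_i,p_i\rangle$. For $f:\bar\Delta_n\to\mathbb{R}$: $K^{\gamma}_{P_{t_i}}f(t)=p_i\int_{a_i}^{t_i}k_\gamma(t_i-\tau)f(t_1,\dots,\tau,\dots,t_n)d\tau+q_i\int_{t_i}^{b_i}k_\gamma(\tau-t_i)f(t_1,\dots,\tau,\dots,t_n)d\tau$ ($\tau$ in the $i$-th slot); $A^{\alpha}_{P_{t_i}}f=\frac{\partial}{\partial t_i}K^{1-\alpha}_{P_{t_i}}f$; $B^{\alpha}_{P_{t_i}}f=K^{1-\alpha}_{P_{t_i}}\frac{\partial f}{\partial t_i}$; componentwise on vector functions. Standing data: $\boldsymbol\alpha,\boldsymbol\beta\in(0,1)^n$; $P^j=(P^j_{t_1},\dots,P^j_{t_n})$, $P^j_{t_i}=\langle a_i,t_i,b_i,p^j_i,q^j_i\rangle$, $j=1,2$; $k_{1-\alpha_i},k_{\beta_i}\in L_1((0,b_i-a_i);\mathbb{R})$. $\nabla^{\boldsymbol\alpha}_{B_{P^1}}u$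 is the $N\times n$ array with entries $B^{\alpha_i}_{P^1_{t_i}}u_k$, $\nabla^{\boldsymbol\beta}_{K_{P^2}}u$ the array with entries $K^{\beta_i}_{P^2_{t_i}}u_k$. $F(t,x,v,w)$ ($t\in\bar\Delta_n$, $x\in\mathbb{R}^N$, $v=(v_{k,i}),w=(w_{k,i})\in\mathbb{R}^{N\times n}$) is $C^2$ with partial derivatives $\partial_{x_k}F,\partial_{v_{k,i}}F,\partial_{w_{k,i}}F$; $F\{u\}(t)$ denotes evaluation at $(t,u(t),\nabla^{\boldsymbol\alpha}_{B_{P^1}}u(t),\nabla^{\boldsymbol\beta}_{K_{P^2}}u(t))$; $\mathcal{J}[u]=\int_{\Delta_n}F\{u\}\,dt$. Admissible: $u\in C^1(\bar\Delta_n;\mathbb{R}^N)$ with all $B^{\alpha_i}_{P^1_{t_i}}u$, $K^{\beta_i}_{P^2_{t_i}}u$ continuous on $\bar\Delta_n$ and $u=\psi$ on $\partial\Delta_n$ for a given $\psi$. (R): for all $i,k$, $K^{1-\alpha_i}_{P^{1*}_{t_i}}(\partial_{v_{k,i}}F\{u\})\in C^1(\bar\Delta_n)$ and $K^{\beta_i}_{P^{2*}_{t_i}}(\partial_{w_{k,i}}F\{u\})$ is continuous on $\bar\Delta_n$. Transformations: $\xi$ is $C^1$, $\hat\xi(t)=\xi(t,u(t))\in C^1(\bar\Delta_n;\mathbb{R}^N)$ with continuous $B^{\alpha_i}_{P^1_{t_i}}\hat\xi$, $K^{\beta_i}_{P^2_{t_i}}\hat\xi$; $r_\varepsilon\in C^1(\bar\Delta_n;\mathbb{R}^N)$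 with continuous $B^{\alpha_i}_{P^1_{t_i}}r_\varepsilon$, $K^{\beta_i}_{P^2_{t_i}}r_\varepsilon$, and $r_\varepsilon$, $B^{\alpha_i}_{P^1_{t_i}}r_\varepsilon$, $K^{\beta_i}_{P^2_{t_i}}r_\varepsilon$ are $o(\varepsilon)$ pointwise. Bilinear operators: for $f,g$ with the required operators defined, $\mathrm{D}^{\alpha_i}_{P^1_{t_i}}[f,g]=f\,A^{\alpha_i}_{P^{1*}_{t_i}}g+g\,B^{\alpha_i}_{P^1_{t_i}}f$ and $\mathrm{I}^{\beta_i}_{P^2_{t_i}}[f,g]=-f\,K^{\beta_i}_{P^{2*}_{t_i}}g+g\,K^{\beta_i}_{P^2_{t_i}}f$. *)

theory Defs
  imports "HOL-Analysis.Analysis"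
begin

text \<open>Points of the closed box are vectors t :: real^'n (the index type 'n plays the
role of {1..n}); values of admissible functions are vectors in real^'m ('m = {1..N}).
Arrays v = (v_{k,i}) are of type real^'n^'m, entry (k,i) being v$k$i.
The kernel family is a function kern :: real => real => real, kern gamma s = k_gamma(s)
(difference kernel).\<close>

definition upd :: "'a^'i \<Rightarrow> 'i \<Rightarrow> 'a \<Rightarrow> 'a^'i" where
  "upd t i s = (\<chi> j. if j = i then s else t $ j)"

definition upd2 :: "'a^'i^'k \<Rightarrow> 'k \<Rightarrow> 'i \<Rightarrow> 'a \<Rightarrow> 'a^'i^'k" where
  "upd2 v k i s = upd v k (upd (v $ k) i s)"

definition partial :: "real^'n \<Rightarrow> real^'n \<Rightarrow> 'n \<Rightarrow> (real^'n \<Rightarrow> 'b::real_normed_vector)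
    \<Rightarrow> real^'n \<Rightarrow> 'b" where
  "partial a b i g t = vector_derivative (\<lambda>s. g (upd t i s)) (at (t $ i) within {a $ i .. b $ i})"

definition C1_box :: "real^'n \<Rightarrow> real^'n \<Rightarrow> (real^'n \<Rightarrow> 'b::real_normed_vector) \<Rightarrow> bool" where
  "C1_box a b g \<longleftrightarrow> continuous_on (cbox a b) g \<and>
     (\<forall>i. \<forall>t\<in>cbox a b. ((\<lambda>s. g (upd t i s)) has_vector_derivative partial a b i g t)
            (at (t $ i) within {a $ i .. b $ i})) \<and>
     (\<forall>i. continuous_on (cbox a b) (partial a b i g))"

definition Kop :: "(real \<Rightarrow> real \<Rightarrow> real) \<Rightarrow> real \<Rightarrow> real^'n \<Rightarrow> real^'n \<Rightarrow> real \<Rightarrow> real \<Rightarrow> 'n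
    \<Rightarrow> (real^'n \<Rightarrow> real) \<Rightarrow> real^'n \<Rightarrow> real" where
  "Kop kern \<gamma> a b p q i f t =
     p * (LINT \<tau>:{a $ i .. t $ i}|lborel. kern \<gamma> (t $ i - \<tau>) * f (upd t i \<tau>)) +
     q * (LINT \<tau>:{t $ i .. b $ i}|lborel. kern \<gamma> (\<tau> - t $ i) * f (upd t i \<tau>))"

definition Aop :: "(real \<Rightarrow> real \<Rightarrow> real) \<Rightarrow> real \<Rightarrow> real^'n \<Rightarrow> real^'n \<Rightarrow> real \<Rightarrow> real \<Rightarrow> 'n
    \<Rightarrow> (real^'n \<Rightarrow> real) \<Rightarrow> real^'n \<Rightarrow> real" where
  "Aop kern \<alpha> a b p q i f = partial a b i (Kop kern (1 - \<alpha>) a b p q i f)"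

definition Bop :: "(real \<Rightarrow> real \<Rightarrow> real) \<Rightarrow> real \<Rightarrow> real^'n \<Rightarrow> real^'n \<Rightarrow> real \<Rightarrow> real \<Rightarrow> 'n
    \<Rightarrow> (real^'n \<Rightarrow> real) \<Rightarrow> real^'n \<Rightarrow> real" where
  "Bop kern \<alpha> a b p q i f = Kop kern (1 - \<alpha>) a b p q i (partial a b i f)"

text \<open>The arrays nabla^alpha_{B_{P^1}} u and nabla^beta_{K_{P^2}} u (P^j given by the
vectors p, q of coefficients p^j_i, q^j_i).\<close>
definition gradB :: "(real \<Rightarrow> real \<Rightarrow> real) \<Rightarrow> real^'n \<Rightarrow> real^'n \<Rightarrow> real^'n \<Rightarrow> real^'n \<Rightarrow> real^'n
    \<Rightarrow> (real^'n \<Rightarrow> real^'m) \<Rightarrow> real^'n \<Rightarrow> real^'n^'m" where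
  "gradB kern \<alpha> a b p q u t = (\<chi> k. \<chi> i. Bop kern (\<alpha> $ i) a b (p $ i) (q $ i) i (\<lambda>s. u s $ k) t)"

definition gradK :: "(real \<Rightarrow> real \<Rightarrow> real) \<Rightarrow> real^'n \<Rightarrow> real^'n \<Rightarrow> real^'n \<Rightarrow> real^'n \<Rightarrow> real^'n
    \<Rightarrow> (real^'n \<Rightarrow> real^'m) \<Rightarrow> real^'n \<Rightarrow> real^'n^'m" where
  "gradK kern \<beta> a b p q u t = (\<chi> k. \<chi> i. Kop kern (\<beta> $ i) a b (p $ i) (q $ i) i (\<lambda>s. u s $ k) t)"

definition Feval :: "(real^'n \<Rightarrow> real^'m \<Rightarrow> real^'n^'m \<Rightarrow> real^'n^'m \<Rightarrow> real)
    \<Rightarrow> (real \<Rightarrow> real \<Rightarrow> real) \<Rightarrow> real^'n \<Rightarrow> real^'n \<Rightarrow> real^'n \<Rightarrow> real^'n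
    \<Rightarrow> real^'n \<Rightarrow> real^'n \<Rightarrow> real^'n \<Rightarrow> real^'n
    \<Rightarrow> (real^'n \<Rightarrow> real^'m) \<Rightarrow> real^'n \<Rightarrow> real" where
  "Feval G kern \<alpha> \<beta> a b p1 q1 p2 q2 u t =
     G t (u t) (gradB kern \<alpha> a b p1 q1 u t) (gradK kern \<beta> a b p2 q2 u t)"

definition dFx :: "(real^'n \<Rightarrow> real^'m \<Rightarrow> real^'n^'m \<Rightarrow> real^'n^'m \<Rightarrow> real) \<Rightarrow> 'm
    \<Rightarrow> real^'n \<Rightarrow> real^'m \<Rightarrow> real^'n^'m \<Rightarrow> real^'n^'m \<Rightarrow> real" where
  "dFx F k t x v w = deriv (\<lambda>s. F t (upd x k s) v w) (x $ k)"

definition dFv :: "(real^'n \<Rightarrow> real^'m \<Rightarrow> real^'n^'m \<Rightarrow> real^'n^'m \<Rightarrow> real) \<Rightarrow> 'm \<Rightarrow> 'n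
    \<Rightarrow> real^'n \<Rightarrow> real^'m \<Rightarrow> real^'n^'m \<Rightarrow> real^'n^'m \<Rightarrow> real" where
  "dFv F k i t x v w = deriv (\<lambda>s. F t x (upd2 v k i s) w) (v $ k $ i)"

definition dFw :: "(real^'n \<Rightarrow> real^'m \<Rightarrow> real^'n^'m \<Rightarrow> real^'n^'m \<Rightarrow> real) \<Rightarrow> 'm \<Rightarrow> 'n
    \<Rightarrow> real^'n \<Rightarrow> real^'m \<Rightarrow> real^'n^'m \<Rightarrow> real^'n^'m \<Rightarrow> real" where
  "dFw F k i t x v w = deriv (\<lambda>s. F t x v (upd2 w k i s)) (w $ k $ i)"

definition C1_on :: "'a::real_normed_vector set \<Rightarrow> ('a \<Rightarrow> 'b::real_normed_vector) \<Rightarrow> bool" where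
  "C1_on D G \<longleftrightarrow> (\<exists>G'. (\<forall>z\<in>D. (G has_derivative blinfun_apply (G' z)) (at z within D))
                       \<and> continuous_on D G')"

definition C2_on :: "'a::real_normed_vector set \<Rightarrow> ('a \<Rightarrow> real) \<Rightarrow> bool" where
  "C2_on D G \<longleftrightarrow> (\<exists>G' G''. (\<forall>z\<in>D. (G has_derivative blinfun_apply (G' z)) (at z within D))
     \<and> (\<forall>z\<in>D. (G' has_derivative blinfun_apply (G'' z)) (at z within D))
     \<and> continuous_on D G'')"

definition regular_fn :: "(real \<Rightarrow> real \<Rightarrow> real) \<Rightarrow> real^'n \<Rightarrow> real^'n \<Rightarrow> real^'n \<Rightarrow> real^'n
    \<Rightarrow> real^'n \<Rightarrow> real^'n \<Rightarrow> real^'n \<Rightarrow> real^'n \<Rightarrow> (real^'n \<Rightarrow> real^'m) \<Rightarrow> bool" where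
  "regular_fn kern \<alpha> \<beta> a b p1 q1 p2 q2 g \<longleftrightarrow> C1_box a b g \<and>
     (\<forall>i k. continuous_on (cbox a b) (Bop kern (\<alpha> $ i) a b (p1 $ i) (q1 $ i) i (\<lambda>s. g s $ k))) \<and>
     (\<forall>i k. continuous_on (cbox a b) (Kop kern (\<beta> $ i) a b (p2 $ i) (q2 $ i) i (\<lambda>s. g s $ k)))"

text \<open>The bilinear operators D and I (P^1, P^2 given by coefficients p, q; the dual
parameter set swaps p and q).\<close>
definition Dop :: "(real \<Rightarrow> real \<Rightarrow> real) \<Rightarrow> real \<Rightarrow> real^'n \<Rightarrow> real^'n \<Rightarrow> real \<Rightarrow> real \<Rightarrow> 'n
    \<Rightarrow> (real^'n \<Rightarrow> real) \<Rightarrow> (real^'n \<Rightarrow> real) \<Rightarrow> real^'n \<Rightarrow> real" where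
  "Dop kern \<alpha> a b p q i f g t = f t * Aop kern \<alpha> a b q p i g t + g t * Bop kern \<alpha> a b p q i f t"

definition Iop :: "(real \<Rightarrow> real \<Rightarrow> real) \<Rightarrow> real \<Rightarrow> real^'n \<Rightarrow> real^'n \<Rightarrow> real \<Rightarrow> real \<Rightarrow> 'n
    \<Rightarrow> (real^'n \<Rightarrow> real) \<Rightarrow> (real^'n \<Rightarrow> real) \<Rightarrow> real^'n \<Rightarrow> real" where
  "Iop kern \<beta> a b p q i f g t = - f t * Kop kern \<beta> a b q p i g t + g t * Kop kern \<beta> a b p q i f t"

end

theory Submission
  imports Defs
begin

lemma bounded_on_Icc:
  fixes hh :: "real \<Rightarrow> real"
  assumes "continuous_on {lo..hi} hh"
  obtains M where "M > 0" "\<forall>\<tau>\<in>{lo..hi}. \<bar>hh \<tau>\<bar> \<le> M"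
proof -
  have "compact (hh ` {lo..hi})" using assms compact_continuous_image compact_Icc by blast
  then obtain M where "\<forall>y\<in>hh ` {lo..hi}. norm y \<le> M" using compact_imp_bounded bounded_iff by metis
  then have "\<forall>\<tau>\<in>{lo..hi}. \<bar>hh \<tau>\<bar> \<le> max M 1" by force
  then show ?thesis using that[of "max M 1"] by auto
qed

lemma piece_int_aux:
  fixes g hh k :: "real \<Rightarrow> real"
  assumes g: "integrable lborel g" and c: "continuous_on {lo..hi} hh"
    and eq: "\<And>\<tau>. \<tau> \<in> {lo<..<hi} \<Longrightarrow> g \<tau> = k \<tau>"
  shows "set_integrable lborel {lo..hi} (\<lambda>\<tau>. k \<tau> * hh \<tau>)"
proof -
  obtain M where M: "M > 0" "\<forall>\<tau>\<in>{lo..hi}. \<bar>hh \<tau>\<bar> \<le> M" using bounded_on_Icc[OF c] by blast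
  have m1: "(\<lambda>\<tau>. indicator {lo<..<hi} \<tau> *\<^sub>R hh \<tau>) \<in> borel_measurable borel"
    by (rule borel_measurable_continuous_on_indicator) (auto intro: continuous_on_subset[OF c])
  have gm: "g \<in> borel_measurable lborel" using g by auto
  have "integrable lborel (\<lambda>\<tau>. (indicator {lo<..<hi} \<tau> *\<^sub>R hh \<tau>) * g \<tau>)"
  proof (rule Bochner_Integration.integrable_bound)
    show "integrable lborel (\<lambda>\<tau>. M * g \<tau>)" using g by auto
    show "(\<lambda>\<tau>. (indicator {lo<..<hi} \<tau> *\<^sub>R hh \<tau>) * g \<tau>) \<in> borel_measurable lborel"
      using m1 gm by measurable
    show "AE \<tau> in lborel. norm ((indicator {lo<..<hi} \<tau> *\<^sub>R hh \<tau>) * g \<tau>) \<le> norm (M * g \<tau>)"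
    proof (rule AE_I2)
      fix \<tau>
      show "norm ((indicator {lo<..<hi} \<tau> *\<^sub>R hh \<tau>) * g \<tau>) \<le> norm (M * g \<tau>)"
      proof (cases "\<tau> \<in> {lo<..<hi}")
        case True
        then have "\<bar>hh \<tau>\<bar> \<le> M" using M by auto
        then show ?thesis using True M by (simp add: abs_mult mult_right_mono)
      qed simp
    qed
  qed
  then show ?thesis
    unfolding set_integrable_def
    apply (subst integrable_discrete_difference[where X="{lo,hi}"])
    using eq by (auto simp: indicator_def)
qed

lemma piece_left:
  fixes k hh :: "real \<Rightarrow> real"
  assumes k: "set_integrable lborel {0<..<L} k" and c: "continuous_on {lo..hi} hh"
    and "hi - lo \<le> L"
  shows "set_integrable lborel {lo..hi} (\<lambda>\<tau>. k (hi - \<tau>) * hh \<tau>)"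
proof -
  have "integrable lborel (\<lambda>x. indicator {0<..<L} x *\<^sub>R k x)" using k by (simp add: set_integrable_def)
  from lborel_integrable_real_affine[OF this, of "-1" hi]
  have "integrable lborel (\<lambda>\<tau>. indicator {0<..<L} (hi - \<tau>) *\<^sub>R k (hi - \<tau>))" by simp
  then show ?thesis
    by (rule piece_int_aux[OF _ c]) (use assms(3) in \<open>auto simp: indicator_def\<close>)
qed

lemma piece_right:
  fixes k hh :: "real \<Rightarrow> real"
  assumes k: "set_integrable lborel {0<..<L} k" and c: "continuous_on {lo..hi} hh"
    and "hi - lo \<le> L"
  shows "set_integrable lborel {lo..hi} (\<lambda>\<tau>. k (\<tau> - lo) * hh \<tau>)"
proof -
  have "integrable lborel (\<lambda>x. indicator {0<..<L} x *\<^sub>R k x)" using k by (simp add: set_integrable_def)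
  from lborel_integrable_real_affine[OF this, of "1" "-lo"]
  have "integrable lborel (\<lambda>\<tau>. indicator {0<..<L} (\<tau> - lo) *\<^sub>R k (\<tau> - lo))" by simp
  then show ?thesis
    by (rule piece_int_aux[OF _ c]) (use assms(3) in \<open>auto simp: indicator_def\<close>)
qed

lemma upd_nth[simp]: "upd t i s $ j = (if j = i then s else t $ j)"
  by (simp add: upd_def)

lemma upd_in_cbox:
  fixes t a b :: "real^'n"
  assumes "t \<in> cbox a b" "s \<in> {a $ i .. b $ i}"
  shows "upd t i s \<in> cbox a b"
  using assms unfolding mem_box_cart upd_def by auto

lemma continuous_upd: "continuous_on S (\<lambda>s. upd t i (s::real))"
  unfolding upd_def by (intro continuous_intros) (case_tac "j = i"; simp)

lemma cont_slice:
  fixes f :: "real^'n \<Rightarrow> real"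
  assumes "continuous_on (cbox a b) f" "t \<in> cbox a b" "{lo..hi} \<subseteq> {a $ i .. b $ i}"
  shows "continuous_on {lo..hi} (\<lambda>s. f (upd t i s))"
  by (rule continuous_on_compose2[OF assms(1) continuous_upd]) (use assms upd_in_cbox in blast)

lemma Kop_cong:
  assumes "t \<in> cbox a b" "\<And>s. s \<in> cbox a b \<Longrightarrow> f s = g s"
  shows "Kop kern \<gamma> a b p q i f t = Kop kern \<gamma> a b p q i g t"
proof -
  have "t $ i \<in> {a $ i .. b $ i}" using assms by (simp add: mem_box_cart)
  then have A: "\<And>\<tau>. \<tau> \<in> {a $ i .. t $ i} \<Longrightarrow> f (upd t i \<tau>) = g (upd t i \<tau>)"
     and B: "\<And>\<tau>. \<tau> \<in> {t $ i .. b $ i} \<Longrightarrow> f (upd t i \<tau>) = g (upd t i \<tau>)"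
    using assms upd_in_cbox[OF assms(1)] by (auto intro!: assms(2))
  show ?thesis unfolding Kop_def
    by (subst set_lebesgue_integral_cong[where g="\<lambda>\<tau>. kern \<gamma> (t $ i - \<tau>) * g (upd t i \<tau>)"],
        simp, use A in simp,
        subst set_lebesgue_integral_cong[where g="\<lambda>\<tau>. kern \<gamma> (\<tau> - t $ i) * g (upd t i \<tau>)"],
        simp, use B in simp, simp)
qed

lemma Kop_lin:
  fixes f g h :: "real^'n \<Rightarrow> real"
  assumes k: "set_integrable lborel {0<..<b $ i - a $ i} (kern \<gamma>)"
    and cf: "continuous_on (cbox a b) f" and cg: "continuous_on (cbox a b) g"
    and ch: "continuous_on (cbox a b) h" and t: "t \<in> cbox a b"
  shows "Kop kern \<gamma> a b p q i (\<lambda>s. f s + c * g s + h s) t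
       = Kop kern \<gamma> a b p q i f t + c * Kop kern \<gamma> a b p q i g t + Kop kern \<gamma> a b p q i h t"
proof -
  have ti: "a $ i \<le> t $ i" "t $ i \<le> b $ i" using t by (auto simp: mem_box_cart)
  have sub1: "{a $ i .. t $ i} \<subseteq> {a $ i .. b $ i}" and sub2: "{t $ i .. b $ i} \<subseteq> {a $ i .. b $ i}"
    using ti by auto
  have L: "set_integrable lborel {a $ i .. t $ i} (\<lambda>\<tau>. kern \<gamma> (t $ i - \<tau>) * F (upd t i \<tau>))"
    if "continuous_on (cbox a b) F" for F :: "real^'n \<Rightarrow> real"
    by (rule piece_left[OF k cont_slice[OF that t sub1]]) (use ti in simp)
  have R: "set_integrable lborel {t $ i .. b $ i} (\<lambda>\<tau>. kern \<gamma> (\<tau> - t $ i) * F (upd t i \<tau>))"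
    if "continuous_on (cbox a b) F" for F :: "real^'n \<Rightarrow> real"
    by (rule piece_right[OF k cont_slice[OF that t sub2]]) (use ti in simp)
  have e1: "(\<lambda>\<tau>. kern \<gamma> (t $ i - \<tau>) * (f (upd t i \<tau>) + c * g (upd t i \<tau>) + h (upd t i \<tau>)))
     = (\<lambda>\<tau>. (kern \<gamma> (t $ i - \<tau>) * f (upd t i \<tau>) + c * (kern \<gamma> (t $ i - \<tau>) * g (upd t i \<tau>)))
           + kern \<gamma> (t $ i - \<tau>) * h (upd t i \<tau>))"
    by (simp add: algebra_simps)
  have e2: "(\<lambda>\<tau>. kern \<gamma> (\<tau> - t $ i) * (f (upd t i \<tau>) + c * g (upd t i \<tau>) + h (upd t i \<tau>)))
     = (\<lambda>\<tau>. (kern \<gamma> (\<tau> - t $ i) * f (upd t i \<tau>) + c * (kern \<gamma> (\<tau> - t $ i) * g (upd t i \<tau>)))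
           + kern \<gamma> (\<tau> - t $ i) * h (upd t i \<tau>))"
    by (simp add: algebra_simps)
  show ?thesis
    unfolding Kop_def e1 e2
    using L[OF cf] L[OF cg] L[OF ch] R[OF cf] R[OF cg] R[OF ch]
    by (simp add: set_integral_add algebra_simps)
qed

lemma partial_eq:
  fixes f :: "real^'n \<Rightarrow> 'b::euclidean_space"
  assumes ab: "\<forall>i. a $ i < b $ i" and t: "t \<in> cbox a b"
    and d: "((\<lambda>s. f (upd t i s)) has_vector_derivative D) (at (t $ i) within {a $ i .. b $ i})"
  shows "partial a b i f t = D"
  unfolding partial_def
  by (rule vector_derivative_within_closed_interval[OF _ _ d]) (use ab t in \<open>auto simp: mem_box_cart\<close>)

lemma hvd_nth:
  assumes "(f has_vector_derivative D) F"
  shows "((\<lambda>x. f x $ k) has_vector_derivative D $ k) F"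
  using bounded_linear.has_derivative[OF bounded_linear_vec_nth[of k] assms[unfolded has_vector_derivative_def]]
  by (simp add: has_vector_derivative_def)

lemma C1_comp:
  fixes u :: "real^'n \<Rightarrow> real^'m"
  assumes ab: "\<forall>i. a $ i < b $ i" and u: "C1_box a b u"
  shows "C1_box a b (\<lambda>s. u s $ k)"
    and "\<And>t. t \<in> cbox a b \<Longrightarrow> partial a b i (\<lambda>s. u s $ k) t = partial a b i u t $ k"
proof -
  have pe: "partial a b i (\<lambda>s. u s $ k) t = partial a b i u t $ k" if "t \<in> cbox a b" for t i
    by (rule partial_eq[OF ab that hvd_nth]) (use u that in \<open>auto simp: C1_box_def\<close>)
  then show "\<And>t. t \<in> cbox a b \<Longrightarrow> partial a b i (\<lambda>s. u s $ k) t = partial a b i u t $ k" by blast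
  show "C1_box a b (\<lambda>s. u s $ k)"
    unfolding C1_box_def
  proof (intro conjI allI ballI)
    show "continuous_on (cbox a b) (\<lambda>s. u s $ k)" using u by (auto simp: C1_box_def intro: continuous_on_component)
    fix i
    show "((\<lambda>s. u (upd t i s) $ k) has_vector_derivative partial a b i (\<lambda>s. u s $ k) t)
            (at (t $ i) within {a $ i..b $ i})" if "t \<in> cbox a b" for t
      using hvd_nth[of "\<lambda>s. u (upd t i s)"] u that pe[OF that] by (auto simp: C1_box_def)
    have "continuous_on (cbox a b) (\<lambda>t. partial a b i u t $ k)"
      using u by (auto simp: C1_box_def intro: continuous_on_component)
    then show "continuous_on (cbox a b) (partial a b i (\<lambda>s. u s $ k))"
      by (rule continuous_on_eq) (use pe in auto)
  qed
qed

lemma partial_lin: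
  fixes f g h :: "real^'n \<Rightarrow> real"
  assumes ab: "\<forall>i. a $ i < b $ i" and f: "C1_box a b f" and g: "C1_box a b g" and h: "C1_box a b h"
    and t: "t \<in> cbox a b"
  shows "partial a b i (\<lambda>s. f s + c * g s + h s) t = partial a b i f t + c * partial a b i g t + partial a b i h t"
proof (rule partial_eq[OF ab t])
  have "((\<lambda>s. f (upd t i s)) has_vector_derivative partial a b i f t) (at (t $ i) within {a $ i..b $ i})"
       "((\<lambda>s. g (upd t i s)) has_vector_derivative partial a b i g t) (at (t $ i) within {a $ i..b $ i})"
       "((\<lambda>s. h (upd t i s)) has_vector_derivative partial a b i h t) (at (t $ i) within {a $ i..b $ i})"
    using f g h t by (auto simp: C1_box_def)
  then show "((\<lambda>s. f (upd t i s) + c * g (upd t i s) + h (upd t i s)) has_vector_derivative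
      partial a b i f t + c * partial a b i g t + partial a b i h t) (at (t $ i) within {a $ i..b $ i})"
    by (intro derivative_intros) (auto simp: has_vector_derivative_def has_field_derivative_def mult.commute)
qed

lemma Bop_lin:
  fixes f g h :: "real^'n \<Rightarrow> real"
  assumes ab: "\<forall>i. a $ i < b $ i" and k: "set_integrable lborel {0<..<b $ i - a $ i} (kern (1 - \<alpha>))"
    and f: "C1_box a b f" and g: "C1_box a b g" and h: "C1_box a b h" and t: "t \<in> cbox a b"
  shows "Bop kern \<alpha> a b p q i (\<lambda>s. f s + c * g s + h s) t
     = Bop kern \<alpha> a b p q i f t + c * Bop kern \<alpha> a b p q i g t + Bop kern \<alpha> a b p q i h t"
proof -
  have "Bop kern \<alpha> a b p q i (\<lambda>s. f s + c * g s + h s) t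
      = Kop kern (1 - \<alpha>) a b p q i (\<lambda>s. partial a b i f s + c * partial a b i g s + partial a b i h s) t"
    unfolding Bop_def by (rule Kop_cong[OF t]) (rule partial_lin[OF ab f g h])
  also have "\<dots> = Bop kern \<alpha> a b p q i f t + c * Bop kern \<alpha> a b p q i g t + Bop kern \<alpha> a b p q i h t"
  proof -
    have "continuous_on (cbox a b) (partial a b i F)" if "C1_box a b F" for F :: "real^'n \<Rightarrow> real"
      using that by (auto simp: C1_box_def)
    note cs = this[OF f] this[OF g] this[OF h]
    show ?thesis unfolding Bop_def by (rule Kop_lin[where kern=kern and \<gamma>="1 - \<alpha>", OF k cs t])
  qed
  finally show ?thesis .
qed

lemma gradB_lin:
  fixes u g h :: "real^'n \<Rightarrow> real^'m"
  assumes ab: "\<forall>i. a $ i < b $ i" and k: "\<forall>i. set_integrable lborel {0<..<b $ i - a $ i} (kern (1 - \<alpha> $ i))"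
    and u: "C1_box a b u" and g: "C1_box a b g" and h: "C1_box a b h" and t: "t \<in> cbox a b"
  shows "gradB kern \<alpha> a b p q (\<lambda>s. u s + c *\<^sub>R g s + h s) t
     = gradB kern \<alpha> a b p q u t + c *\<^sub>R gradB kern \<alpha> a b p q g t + gradB kern \<alpha> a b p q h t"
proof -
  have "Bop kern (\<alpha> $ i) a b p' q' i (\<lambda>s. u s $ k + c * g s $ k + h s $ k) t
     = Bop kern (\<alpha> $ i) a b p' q' i (\<lambda>s. u s $ k) t + c * Bop kern (\<alpha> $ i) a b p' q' i (\<lambda>s. g s $ k) t
       + Bop kern (\<alpha> $ i) a b p' q' i (\<lambda>s. h s $ k) t" for i k p' q'
  proof -
    have ki: "set_integrable lborel {0<..<b $ i - a $ i} (kern (1 - \<alpha> $ i))" using k by blast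
    show ?thesis by (rule Bop_lin[where kern=kern and \<alpha>="\<alpha> $ i", OF ab ki C1_comp(1)[OF ab u, of k] C1_comp(1)[OF ab g, of k] C1_comp(1)[OF ab h, of k] t])
  qed
  then show ?thesis unfolding gradB_def by (simp add: vec_eq_iff)
qed

lemma gradK_lin:
  fixes u g h :: "real^'n \<Rightarrow> real^'m"
  assumes ab: "\<forall>i. a $ i < b $ i" and k: "\<forall>i. set_integrable lborel {0<..<b $ i - a $ i} (kern (\<beta> $ i))"
    and u: "C1_box a b u" and g: "C1_box a b g" and h: "C1_box a b h" and t: "t \<in> cbox a b"
  shows "gradK kern \<beta> a b p q (\<lambda>s. u s + c *\<^sub>R g s + h s) t
     = gradK kern \<beta> a b p q u t + c *\<^sub>R gradK kern \<beta> a b p q g t + gradK kern \<beta> a b p q h t"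
proof -
  have c: "continuous_on (cbox a b) (\<lambda>s. F s $ k)" if "C1_box a b F" for F :: "real^'n \<Rightarrow> real^'m" and k
    using that by (auto simp: C1_box_def intro: continuous_on_component)
  show ?thesis
  proof -
    have "Kop kern (\<beta> $ i) a b p' q' i (\<lambda>s. u s $ k + c * g s $ k + h s $ k) t
     = Kop kern (\<beta> $ i) a b p' q' i (\<lambda>s. u s $ k) t + c * Kop kern (\<beta> $ i) a b p' q' i (\<lambda>s. g s $ k) t
       + Kop kern (\<beta> $ i) a b p' q' i (\<lambda>s. h s $ k) t" for i k p' q'
    proof -
      have ki: "set_integrable lborel {0<..<b $ i - a $ i} (kern (\<beta> $ i))" using k by blast
      show ?thesis by (rule Kop_lin[where kern=kern and \<gamma>="\<beta> $ i", OF ki c[OF u] c[OF g] c[OF h] t])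
    qed
    then show ?thesis unfolding gradK_def by (simp add: vec_eq_iff)
  qed
qed

lemma pos_box_contra:
  fixes h :: "real^'n \<Rightarrow> real"
  assumes cont: "continuous_on (cbox a b) h"
    and int0: "\<forall>c d. box c d \<subseteq> box a b \<longrightarrow> (LINT x:box c d|lborel. h x) = 0"
    and t: "t \<in> box a b" and pos: "h t > 0"
  shows False
proof -
  have "continuous (at t) h" using continuous_on_interior[OF cont] t by simp
  then obtain e where e: "e > 0" "\<forall>y. dist y t < e \<longrightarrow> dist (h y) (h t) < h t / 2"
    unfolding continuous_at_eps_delta using pos by (meson half_gt_zero)
  obtain e2 where e2: "e2 > 0" "ball t e2 \<subseteq> box a b" using t open_box openE by metis
  define m where "m = min e e2"
  define \<delta> where "\<delta> = m / (real CARD('n) + 1)"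
  have m: "m > 0" using e e2 by (simp add: m_def)
  have \<delta>: "\<delta> > 0" using m by (simp add: \<delta>_def)
  have cd\<delta>: "real CARD('n) * \<delta> < m" using m
    by (simp add: \<delta>_def field_simps)
  define c where "c = (\<chi> j. t $ j - \<delta>)"
  define d where "d = (\<chi> j. t $ j + \<delta>)"
  have sub: "cbox c d \<subseteq> ball t m"
  proof
    fix y assume y: "y \<in> cbox c d"
    have "norm (y - t) \<le> (\<Sum>j\<in>UNIV. \<bar>(y - t) $ j\<bar>)" by (rule norm_le_l1_cart)
    also have "\<dots> \<le> (\<Sum>j\<in>(UNIV::'n set). \<delta>)"
      using y unfolding mem_box_cart c_def d_def by (intro sum_mono) (simp add: abs_le_iff, smt (verit))
    also have "\<dots> < m" using cd\<delta> by simp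
    finally show "y \<in> ball t m" by (simp add: dist_norm norm_minus_commute)
  qed
  have bm: "ball t m \<subseteq> ball t e2" "ball t m \<subseteq> ball t e" by (auto simp: m_def)
  have cdab: "cbox c d \<subseteq> box a b" using sub bm e2(2) by blast
  have boxsub: "box c d \<subseteq> box a b"
    using cdab box_subset_cbox[of c d] by blast
  have hge: "h y \<ge> h t / 2" if "y \<in> box c d" for y
  proof -
    have "y \<in> ball t e" using that sub bm box_subset_cbox[of c d] by blast
    then have "dist y t < e" by (simp add: dist_commute)
    then have "dist (h y) (h t) < h t / 2" using e by blast
    then have "- (h t / 2) < h y - h t" unfolding dist_real_def abs_less_iff by (elim conjE) linarith
    then show ?thesis by simp
  qed
  have ccd: "continuous_on (cbox c d) h"
    using cdab box_subset_cbox[of a b] by (intro continuous_on_subset[OF cont]) blast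
  have int_h: "set_integrable lborel (box c d) h"
  proof -
    have "set_integrable lborel (cbox c d) h"
      using borel_integrable_compact[OF compact_cbox ccd] unfolding set_integrable_def .
    then show ?thesis by (rule set_integrable_subset) (auto simp: box_subset_cbox)
  qed
  have int_c: "set_integrable lborel (box c d) (\<lambda>_. h t / 2)"
  proof -
    have "set_integrable lborel (cbox c d) (\<lambda>_. h t / 2)"
      using borel_integrable_compact[OF compact_cbox continuous_on_const, of c d "h t / 2"] unfolding set_integrable_def .
    then show ?thesis by (rule set_integrable_subset) (auto simp: box_subset_cbox)
  qed
  have tin: "t \<in> box c d" using \<delta> by (simp add: mem_box_cart c_def d_def)
  then have ne: "\<forall>i\<in>Basis. c \<bullet> i < d \<bullet> i" using box_ne_empty(2) by blast
  have mpos: "measure lborel (box c d) > 0"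
    using ne unfolding measure_lborel_box_eq
    by (auto intro!: prod_pos simp: inner_diff_left less_imp_le)
  have "(LINT x:box c d|lborel. h t / 2) \<le> (LINT x:box c d|lborel. h x)"
    by (rule set_integral_mono[OF int_c int_h hge])
  moreover have "(LINT x:box c d|lborel. h t / 2) = measure lborel (box c d) * (h t / 2)"
    using emeasure_bounded_finite[OF bounded_box[of c d]] by (subst set_integral_const) auto
  moreover have "measure lborel (box c d) * (h t / 2) > 0" using mpos pos by simp
  ultimately show False using int0 boxsub by auto
qed

lemma zero_from_boxes:
  fixes h :: "real^'n \<Rightarrow> real"
  assumes cont: "continuous_on (cbox a b) h"
    and int0: "\<forall>c d. box c d \<subseteq> box a b \<longrightarrow> (LINT x:box c d|lborel. h x) = 0"
    and t: "t \<in> box a b"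
  shows "h t = 0"
proof (rule ccontr)
  assume "h t \<noteq> 0"
  then consider "h t > 0" | "- h t > 0" by linarith
  then show False
  proof cases
    case 1 then show ?thesis using pos_box_contra[OF cont int0 t] by blast
  next
    case 2
    have "\<forall>c d. box c d \<subseteq> box a b \<longrightarrow> (LINT x:box c d|lborel. - h x) = 0"
      using int0 by (simp add: set_lebesgue_integral_def)
    then show ?thesis using pos_box_contra[of a b "\<lambda>x. - h x", OF continuous_on_minus[OF cont] _ t] 2 by blast
  qed
qed

lemma deriv_line:
  fixes G :: "'a::real_normed_vector \<Rightarrow> real"
  assumes "(G has_derivative L) (at z)"
  shows "deriv (\<lambda>s. G (z + (s - s0) *\<^sub>R e)) s0 = L e"
proof -
  have bl: "bounded_linear L" using assms by (rule has_derivative_bounded_linear)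
  have i: "((\<lambda>s. z + (s - s0) *\<^sub>R e) has_derivative (\<lambda>h. h *\<^sub>R e)) (at s0)"
    by (auto intro!: derivative_eq_intros)
  have "((\<lambda>s. G (z + (s - s0) *\<^sub>R e)) has_derivative (\<lambda>h. L (h *\<^sub>R e))) (at s0)"
    using has_derivative_compose[OF i] assms by simp
  moreover have "(\<lambda>h. L (h *\<^sub>R e)) = (\<lambda>h. h * L e)"
    using bl by (simp add: linear_simps(5) bounded_linear.linear linear_cmul)
  moreover have "(\<lambda>h. h * L e) = (*) (L e)" by (rule ext) simp
  ultimately have "((\<lambda>s. G (z + (s - s0) *\<^sub>R e)) has_field_derivative L e) (at s0)"
    unfolding has_field_derivative_def by simp
  then show ?thesis by (rule DERIV_imp_deriv)
qed

lemma upd_line: "upd x k s = x + (s - x $ k) *\<^sub>R axis k (1::real)"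
  by (simp add: vec_eq_iff upd_def axis_def)

lemma upd2_line: "upd2 v k i s = v + (s - v $ k $ i) *\<^sub>R axis k (axis i (1::real))"
  by (simp add: vec_eq_iff upd2_def upd_def axis_def)

lemma dFx_eq:
  assumes "((\<lambda>(t, x, v, w). F t x v w) has_derivative L) (at (t, x, v, w))"
  shows "dFx F k t x v w = L (0, axis k 1, 0, 0)"
proof -
  have eq: "(\<lambda>s. F t (upd x k s) v w) = (\<lambda>s. (\<lambda>(t, x, v, w). F t x v w) ((t, x, v, w) + (s - x $ k) *\<^sub>R (0, axis k 1, 0, 0)))"
    by (simp add: upd_line)
  show ?thesis unfolding dFx_def eq by (rule deriv_line[OF assms])
qed

lemma dFv_eq:
  assumes "((\<lambda>(t, x, v, w). F t x v w) has_derivative L) (at (t, x, v, w))"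
  shows "dFv F k i t x v w = L (0, 0, axis k (axis i 1), 0)"
proof -
  have eq: "(\<lambda>s. F t x (upd2 v k i s) w) = (\<lambda>s. (\<lambda>(t, x, v, w). F t x v w) ((t, x, v, w) + (s - v $ k $ i) *\<^sub>R (0, 0, axis k (axis i 1), 0)))"
    by (simp add: upd2_line)
  show ?thesis unfolding dFv_def eq by (rule deriv_line[OF assms])
qed

lemma dFw_eq:
  assumes "((\<lambda>(t, x, v, w). F t x v w) has_derivative L) (at (t, x, v, w))"
  shows "dFw F k i t x v w = L (0, 0, 0, axis k (axis i 1))"
proof -
  have eq: "(\<lambda>s. F t x v (upd2 w k i s)) = (\<lambda>s. (\<lambda>(t, x, v, w). F t x v w) ((t, x, v, w) + (s - w $ k $ i) *\<^sub>R (0, 0, 0, axis k (axis i 1))))"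
    by (simp add: upd2_line)
  show ?thesis unfolding dFw_def eq by (rule deriv_line[OF assms])
qed

lemma vec_expand1: "(\<Sum>k\<in>UNIV. X $ k *\<^sub>R axis k (1::real)) = (X :: real^'m)"
  by (simp add: vec_eq_iff axis_def if_distrib cong: if_cong)

lemma vec_expand_axis: "(\<Sum>k\<in>UNIV. axis k (X $ k)) = (X :: real^'n^'m)"
  by (simp add: vec_eq_iff axis_def if_distrib cong: if_cong)

lemma vec_expand2: "(\<Sum>k\<in>UNIV. \<Sum>i\<in>UNIV. V $ k $ i *\<^sub>R axis k (axis i (1::real))) = (V :: real^'n^'m)"
proof -
  have "(\<Sum>i\<in>UNIV. V $ k $ i *\<^sub>R axis k (axis i (1::real))) = axis k (V $ k)" for k
  proof -
    have "(\<Sum>i\<in>UNIV. V $ k $ i *\<^sub>R axis k (axis i (1::real))) = (\<Sum>i\<in>UNIV. axis k (V $ k $ i *\<^sub>R axis i (1::real)))"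
      by (rule sum.cong) (auto simp: vec_eq_iff axis_def)
    also have "\<dots> = axis k (\<Sum>i\<in>UNIV. V $ k $ i *\<^sub>R axis i (1::real))"
      by (simp add: vec_eq_iff axis_def)
    finally show ?thesis by (simp add: vec_expand1)
  qed
  then show ?thesis by (simp add: vec_expand_axis)
qed

lemma L_decomp:
  fixes L :: "(real^'n) \<times> (real^'m) \<times> (real^'n^'m) \<times> (real^'n^'m) \<Rightarrow> real"
  assumes lin: "linear L"
  shows "L (0, X, V, W) = (\<Sum>k\<in>UNIV. X $ k * L (0, axis k 1, 0, 0))
     + (\<Sum>k\<in>UNIV. \<Sum>i\<in>UNIV. V $ k $ i * L (0, 0, axis k (axis i 1), 0))
     + (\<Sum>k\<in>UNIV. \<Sum>i\<in>UNIV. W $ k $ i * L (0, 0, 0, axis k (axis i 1)))"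
proof -
  have l1: "linear (\<lambda>X. L (0, X, 0, 0))" and l2: "linear (\<lambda>V. L (0, 0, V, 0))" and l3: "linear (\<lambda>W. L (0, 0, 0, W))"
  proof -
    have sc: "\<And>c z. c * L z = L (c *\<^sub>R z)" using linear_scale[OF lin] by simp
    show "linear (\<lambda>X. L (0, X, 0, 0))" "linear (\<lambda>V. L (0, 0, V, 0))" "linear (\<lambda>W. L (0, 0, 0, W))"
      unfolding linear_iff by (simp_all add: linear_add[OF lin, symmetric] sc)
  qed
  have "L (0, X, V, W) = L (0, X, 0, 0) + L (0, 0, V, 0) + L (0, 0, 0, W)"
    by (simp add: linear_add[OF lin, symmetric])
  also have "L (0, X, 0, 0) = (\<Sum>k\<in>UNIV. X $ k * L (0, axis k 1, 0, 0))"
  proof -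
    have "L (0, X, 0, 0) = L (0, \<Sum>k\<in>UNIV. X $ k *\<^sub>R axis k 1, 0, 0)" by (simp add: vec_expand1)
    also have "\<dots> = (\<Sum>k\<in>UNIV. X $ k * L (0, axis k 1, 0, 0))"
      by (simp add: linear_sum[OF l1] linear_scale[OF l1])
    finally show ?thesis .
  qed
  also have "L (0, 0, V, 0) = (\<Sum>k\<in>UNIV. \<Sum>i\<in>UNIV. V $ k $ i * L (0, 0, axis k (axis i 1), 0))"
  proof -
    have "L (0, 0, V, 0) = L (0, 0, \<Sum>k\<in>UNIV. \<Sum>i\<in>UNIV. V $ k $ i *\<^sub>R axis k (axis i 1), 0)" by (simp add: vec_expand2)
    also have "\<dots> = (\<Sum>k\<in>UNIV. \<Sum>i\<in>UNIV. V $ k $ i * L (0, 0, axis k (axis i 1), 0))"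
      by (simp add: linear_sum[OF l2] linear_scale[OF l2])
    finally show ?thesis .
  qed
  also have "L (0, 0, 0, W) = (\<Sum>k\<in>UNIV. \<Sum>i\<in>UNIV. W $ k $ i * L (0, 0, 0, axis k (axis i 1)))"
  proof -
    have "L (0, 0, 0, W) = L (0, 0, 0, \<Sum>k\<in>UNIV. \<Sum>i\<in>UNIV. W $ k $ i *\<^sub>R axis k (axis i 1))" by (simp add: vec_expand2)
    also have "\<dots> = (\<Sum>k\<in>UNIV. \<Sum>i\<in>UNIV. W $ k $ i * L (0, 0, 0, axis k (axis i 1)))"
      by (simp add: linear_sum[OF l3] linear_scale[OF l3])
    finally show ?thesis .
  qed
  finally show ?thesis .
qed

lemma final_alg:
  fixes X dx :: "'m::finite \<Rightarrow> real" and A K dv dw Bx Kx :: "'m \<Rightarrow> 'n::finite \<Rightarrow> real"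
  assumes el: "\<forall>k. (\<Sum>i\<in>UNIV. - A k i + K k i) + dx k = 0"
    and l0: "(\<Sum>k\<in>UNIV. X k * dx k) + (\<Sum>k\<in>UNIV. \<Sum>i\<in>UNIV. Bx k i * dv k i)
              + (\<Sum>k\<in>UNIV. \<Sum>i\<in>UNIV. Kx k i * dw k i) = 0"
  shows "(\<Sum>k\<in>UNIV. \<Sum>i\<in>UNIV. X k * A k i + dv k i * Bx k i + (- X k * K k i + dw k i * Kx k i)) = 0"
proof -
  have dx: "dx k = (\<Sum>i\<in>UNIV. A k i - K k i)" for k
    using el[rule_format, of k] by (simp add: sum_subtractf sum_negf)
  have "(\<Sum>k\<in>UNIV. \<Sum>i\<in>UNIV. X k * A k i + dv k i * Bx k i + (- X k * K k i + dw k i * Kx k i))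
      = (\<Sum>k\<in>UNIV. X k * (\<Sum>i\<in>UNIV. A k i - K k i)) + (\<Sum>k\<in>UNIV. \<Sum>i\<in>UNIV. Bx k i * dv k i)
              + (\<Sum>k\<in>UNIV. \<Sum>i\<in>UNIV. Kx k i * dw k i)"
    by (simp add: sum.distrib sum_distrib_left sum_subtractf algebra_simps)
  also have "\<dots> = 0" using l0 by (simp add: dx)
  finally show ?thesis .
qed

theorem mainTheorem7:
  fixes kern :: "real \<Rightarrow> real \<Rightarrow> real"
    and a b \<alpha> \<beta> p1 q1 p2 q2 :: "real^'n"
    and F :: "real^'n \<Rightarrow> real^'m \<Rightarrow> real^'n^'m \<Rightarrow> real^'n^'m \<Rightarrow> real"
    and u \<psi> :: "real^'n \<Rightarrow> real^'m"
    and \<xi> :: "real^'n \<Rightarrow> real^'m \<Rightarrow> real^'m"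
    and r :: "real \<Rightarrow> real^'n \<Rightarrow> real^'m"
  assumes ab: "\<forall>i. a $ i < b $ i"
    and \<alpha>01: "\<forall>i. 0 < \<alpha> $ i \<and> \<alpha> $ i < 1"
    and \<beta>01: "\<forall>i. 0 < \<beta> $ i \<and> \<beta> $ i < 1"
    and kern_L1: "\<forall>i. set_integrable lborel {0<..<b $ i - a $ i} (kern (1 - \<alpha> $ i))
                    \<and> set_integrable lborel {0<..<b $ i - a $ i} (kern (\<beta> $ i))"
    and F_C2: "C2_on (cbox a b \<times> UNIV \<times> UNIV \<times> UNIV) (\<lambda>(t, x, v, w). F t x v w)"
    \<comment> \<open>u admissible\<close>
    and u_reg: "regular_fn kern \<alpha> \<beta> a b p1 q1 p2 q2 u"
    and u_bd: "\<forall>t \<in> cbox a b - box a b. u t = \<psi> t"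
    \<comment> \<open>regularity hypotheses (R)\<close>
    and R1: "\<forall>i k. C1_box a b (Kop kern (1 - \<alpha> $ i) a b (q1 $ i) (p1 $ i) i
                   (Feval (dFv F k i) kern \<alpha> \<beta> a b p1 q1 p2 q2 u))"
    and R2: "\<forall>i k. continuous_on (cbox a b) (Kop kern (\<beta> $ i) a b (q2 $ i) (p2 $ i) i
                   (Feval (dFw F k i) kern \<alpha> \<beta> a b p1 q1 p2 q2 u))"
    \<comment> \<open>Euler--Lagrange equations\<close>
    and EL: "\<forall>k. \<forall>t \<in> box a b.
       (\<Sum>i\<in>UNIV. - Aop kern (\<alpha> $ i) a b (q1 $ i) (p1 $ i) i
                       (Feval (dFv F k i) kern \<alpha> \<beta> a b p1 q1 p2 q2 u) t
                   + Kop kern (\<beta> $ i) a b (q2 $ i) (p2 $ i) i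
                       (Feval (dFw F k i) kern \<alpha> \<beta> a b p1 q1 p2 q2 u) t)
       + Feval (dFx F k) kern \<alpha> \<beta> a b p1 q1 p2 q2 u t = 0"
    \<comment> \<open>the transformation\<close>
    and \<xi>_C1: "C1_on (cbox a b \<times> UNIV) (\<lambda>(t, x). \<xi> t x)"
    and \<xi>hat_reg: "regular_fn kern \<alpha> \<beta> a b p1 q1 p2 q2 (\<lambda>t. \<xi> t (u t))"
    and r_reg: "\<forall>\<epsilon>. regular_fn kern \<alpha> \<beta> a b p1 q1 p2 q2 (r \<epsilon>)"
    and r_small: "\<forall>t \<in> cbox a b. ((\<lambda>\<epsilon>. norm (r \<epsilon> t) / \<bar>\<epsilon>\<bar>) \<longlongrightarrow> 0) (at 0)"
    and rB_small: "\<forall>t \<in> cbox a b. \<forall>i k.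
       ((\<lambda>\<epsilon>. Bop kern (\<alpha> $ i) a b (p1 $ i) (q1 $ i) i (\<lambda>s. r \<epsilon> s $ k) t / \<epsilon>) \<longlongrightarrow> 0) (at 0)"
    and rK_small: "\<forall>t \<in> cbox a b. \<forall>i k.
       ((\<lambda>\<epsilon>. Kop kern (\<beta> $ i) a b (p2 $ i) (q2 $ i) i (\<lambda>s. r \<epsilon> s $ k) t / \<epsilon>) \<longlongrightarrow> 0) (at 0)"
    \<comment> \<open>invariance of J along u + eps xi-hat + r eps on every subrectangle\<close>
    and invariant: "\<exists>\<delta>>0. \<forall>\<epsilon>. \<bar>\<epsilon>\<bar> < \<delta> \<longrightarrow> (\<forall>c d. box c d \<subseteq> box a b \<longrightarrow>
       (LINT t:box c d|lborel. Feval F kern \<alpha> \<beta> a b p1 q1 p2 q2 u t) =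
       (LINT t:box c d|lborel. Feval F kern \<alpha> \<beta> a b p1 q1 p2 q2
                                   (\<lambda>s. u s + \<epsilon> *\<^sub>R \<xi> s (u s) + r \<epsilon> s) t))"
  shows "\<forall>t \<in> box a b.
    (\<Sum>k\<in>UNIV. \<Sum>i\<in>UNIV.
        Dop kern (\<alpha> $ i) a b (p1 $ i) (q1 $ i) i (\<lambda>s. \<xi> s (u s) $ k)
            (Feval (dFv F k i) kern \<alpha> \<beta> a b p1 q1 p2 q2 u) t
      + Iop kern (\<beta> $ i) a b (p2 $ i) (q2 $ i) i (\<lambda>s. \<xi> s (u s) $ k)
            (Feval (dFw F k i) kern \<alpha> \<beta> a b p1 q1 p2 q2 u) t) = 0"
proof -
  let ?D = "cbox a b \<times> (UNIV::(real^'m) set) \<times> (UNIV::(real^'n^'m) set) \<times> (UNIV::(real^'n^'m) set)"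
  let ?G = "\<lambda>(t, x, v, w). F t x v w"
  let ?xh = "\<lambda>s. \<xi> s (u s)"
  let ?gB = "gradB kern \<alpha> a b p1 q1"
  let ?gK = "gradK kern \<beta> a b p2 q2"
  have kB: "\<forall>i. set_integrable lborel {0<..<b $ i - a $ i} (kern (1 - \<alpha> $ i))" using kern_L1 by blast
  have kK: "\<forall>i. set_integrable lborel {0<..<b $ i - a $ i} (kern (\<beta> $ i))" using kern_L1 by blast
  have u1: "C1_box a b u" using u_reg by (simp add: regular_fn_def)
  have x1: "C1_box a b ?xh" using \<xi>hat_reg by (simp add: regular_fn_def)
  have r1: "C1_box a b (r \<epsilon>)" for \<epsilon> using r_reg by (simp add: regular_fn_def)
  have gBc: "continuous_on (cbox a b) (?gB g)" if "regular_fn kern \<alpha> \<beta> a b p1 q1 p2 q2 g" for g :: "real^'n \<Rightarrow> real^'m"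
    unfolding gradB_def by (intro continuous_on_vec_lambda) (use that in \<open>simp add: regular_fn_def\<close>)
  have gKc: "continuous_on (cbox a b) (?gK g)" if "regular_fn kern \<alpha> \<beta> a b p1 q1 p2 q2 g" for g :: "real^'n \<Rightarrow> real^'m"
    unfolding gradK_def by (intro continuous_on_vec_lambda) (use that in \<open>simp add: regular_fn_def\<close>)
  have gc: "continuous_on (cbox a b) g" if "regular_fn kern \<alpha> \<beta> a b p1 q1 p2 q2 g" for g :: "real^'n \<Rightarrow> real^'m"
    using that by (simp add: regular_fn_def C1_box_def)
  obtain G' where G': "\<forall>z\<in>?D. (?G has_derivative blinfun_apply (G' z)) (at z within ?D)"
    using F_C2 unfolding C2_on_def by blast
  have Gcont: "continuous_on ?D ?G"
    using G' by (intro has_derivative_continuous_on[where f'="\<lambda>z. blinfun_apply (G' z)"]) blast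
  have Fev: "Feval F kern \<alpha> \<beta> a b p1 q1 p2 q2 (\<lambda>s. u s + \<epsilon> *\<^sub>R ?xh s + r \<epsilon> s) s
      = ?G (s, u s + \<epsilon> *\<^sub>R ?xh s + r \<epsilon> s, ?gB u s + \<epsilon> *\<^sub>R ?gB ?xh s + ?gB (r \<epsilon>) s,
               ?gK u s + \<epsilon> *\<^sub>R ?gK ?xh s + ?gK (r \<epsilon>) s)" if s: "s \<in> cbox a b" for s \<epsilon>
    unfolding Feval_def
    using gradB_lin[OF ab kB u1 x1 r1 s, of p1 q1 \<epsilon>] gradK_lin[OF ab kK u1 x1 r1 s, of p2 q2 \<epsilon>] by simp
  have Fev_cont: "continuous_on (cbox a b) (Feval F kern \<alpha> \<beta> a b p1 q1 p2 q2 (\<lambda>s. u s + \<epsilon> *\<^sub>R ?xh s + r \<epsilon> s))" for \<epsilon>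
  proof -
    have "continuous_on (cbox a b) (\<lambda>s. ?G (s, u s + \<epsilon> *\<^sub>R ?xh s + r \<epsilon> s, ?gB u s + \<epsilon> *\<^sub>R ?gB ?xh s + ?gB (r \<epsilon>) s,
               ?gK u s + \<epsilon> *\<^sub>R ?gK ?xh s + ?gK (r \<epsilon>) s))"
      apply (rule continuous_on_compose2[OF Gcont])
      using gc[OF u_reg] gc[OF \<xi>hat_reg] gc[OF r_reg[rule_format]] gBc[OF u_reg] gBc[OF \<xi>hat_reg] gBc[OF r_reg[rule_format]]
        gKc[OF u_reg] gKc[OF \<xi>hat_reg] gKc[OF r_reg[rule_format]]
      by (auto intro!: continuous_intros)
    then show ?thesis by (rule continuous_on_eq) (use Fev in simp)
  qed
  have Fu_cont: "continuous_on (cbox a b) (Feval F kern \<alpha> \<beta> a b p1 q1 p2 q2 u)"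
  proof -
    have "continuous_on (cbox a b) (\<lambda>s. ?G (s, u s, ?gB u s, ?gK u s))"
      apply (rule continuous_on_compose2[OF Gcont])
      using gc[OF u_reg] gBc[OF u_reg] gKc[OF u_reg]
      by (auto intro!: continuous_intros)
    then show ?thesis by (simp add: Feval_def)
  qed
  have intsub: "set_integrable lborel (box c d) f" if "continuous_on (cbox a b) f" "box c d \<subseteq> box a b"
    for f :: "real^'n \<Rightarrow> real" and c d
  proof -
    have "set_integrable lborel (cbox a b) f"
      using borel_integrable_compact[OF compact_cbox that(1)] unfolding set_integrable_def .
    then show ?thesis by (rule set_integrable_subset) (use that(2) box_subset_cbox in auto)
  qed
  obtain \<delta> where \<delta>: "\<delta> > 0" and inv: "\<forall>\<epsilon>. \<bar>\<epsilon>\<bar> < \<delta> \<longrightarrow> (\<forall>c d. box c d \<subseteq> box a b \<longrightarrow>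
       (LINT t:box c d|lborel. Feval F kern \<alpha> \<beta> a b p1 q1 p2 q2 u t) =
       (LINT t:box c d|lborel. Feval F kern \<alpha> \<beta> a b p1 q1 p2 q2
                                   (\<lambda>s. u s + \<epsilon> *\<^sub>R \<xi> s (u s) + r \<epsilon> s) t))"
    using invariant by blast
  have step1: "Feval F kern \<alpha> \<beta> a b p1 q1 p2 q2 (\<lambda>s. u s + \<epsilon> *\<^sub>R ?xh s + r \<epsilon> s) t
       = Feval F kern \<alpha> \<beta> a b p1 q1 p2 q2 u t" if e: "\<bar>\<epsilon>\<bar> < \<delta>" and t: "t \<in> box a b" for \<epsilon> t
  proof -
    let ?h = "\<lambda>s. Feval F kern \<alpha> \<beta> a b p1 q1 p2 q2 (\<lambda>s. u s + \<epsilon> *\<^sub>R ?xh s + r \<epsilon> s) s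
       - Feval F kern \<alpha> \<beta> a b p1 q1 p2 q2 u s"
    have "?h t = 0"
    proof (rule zero_from_boxes[OF _ _ t])
      show "continuous_on (cbox a b) ?h" using Fev_cont Fu_cont by (intro continuous_on_diff)
      show "\<forall>c d. box c d \<subseteq> box a b \<longrightarrow> (LINT x:box c d|lborel. ?h x) = 0"
      proof (intro allI impI)
        fix c d assume cd: "box c d \<subseteq> box a b"
        show "(LINT x:box c d|lborel. ?h x) = 0"
          using inv e cd intsub[OF Fev_cont cd] intsub[OF Fu_cont cd] by (simp add: set_integral_diff)
      qed
    qed
    then show ?thesis by simp
  qed
  show ?thesis
  proof
    fix t assume t: "t \<in> box a b"
    have tc: "t \<in> cbox a b" using t box_subset_cbox by blast
    define z0 where "z0 = (t, u t, ?gB u t, ?gK u t)"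
    define L where "L = blinfun_apply (G' z0)"
    have z0D: "z0 \<in> ?D" using tc by (simp add: z0_def)
    have hd: "(?G has_derivative L) (at z0)"
    proof -
      have "(?G has_derivative L) (at z0 within (box a b \<times> (UNIV::(real^'m) set) \<times> (UNIV::(real^'n^'m) set) \<times> (UNIV::(real^'n^'m) set)))"
      proof (rule has_derivative_subset)
        show "(?G has_derivative L) (at z0 within ?D)" using G' z0D unfolding L_def by blast
        show "box a b \<times> (UNIV::(real^'m) set) \<times> (UNIV::(real^'n^'m) set) \<times> (UNIV::(real^'n^'m) set) \<subseteq> ?D"
          using box_subset_cbox[of a b] by blast
      qed
      moreover have "z0 \<in> box a b \<times> (UNIV::(real^'m) set) \<times> (UNIV::(real^'n^'m) set) \<times> (UNIV::(real^'n^'m) set)"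
        unfolding z0_def using t by blast
      moreover have "open (box a b \<times> (UNIV::(real^'m) set) \<times> (UNIV::(real^'n^'m) set) \<times> (UNIV::(real^'n^'m) set))"
        by (intro open_Times open_box open_UNIV)
      ultimately show ?thesis using at_within_open by metis
    qed
    have linL: "linear L" using hd has_derivative_bounded_linear bounded_linear.linear by blast
    define D\<xi> where "D\<xi> = ((0::real^'n), ?xh t, ?gB ?xh t, ?gK ?xh t)"
    define \<rho> where "\<rho> = (\<lambda>\<epsilon>. ((0::real^'n), r \<epsilon> t, ?gB (r \<epsilon>) t, ?gK (r \<epsilon>) t))"
    define \<phi> where "\<phi> = (\<lambda>\<epsilon>::real. if \<epsilon> = 0 then z0 else z0 + \<epsilon> *\<^sub>R D\<xi> + \<rho> \<epsilon>)"
    have G\<phi>: "?G (\<phi> \<epsilon>) = ?G z0" if "\<epsilon> \<noteq> 0" "\<bar>\<epsilon>\<bar> < \<delta>" for \<epsilon>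
    proof -
      have "?G (\<phi> \<epsilon>) = Feval F kern \<alpha> \<beta> a b p1 q1 p2 q2 (\<lambda>s. u s + \<epsilon> *\<^sub>R ?xh s + r \<epsilon> s) t"
        using Fev[OF tc, of \<epsilon>] that by (simp add: \<phi>_def z0_def D\<xi>_def \<rho>_def)
      also have "\<dots> = ?G z0" using step1[OF that(2) t] by (simp add: Feval_def z0_def)
      finally show ?thesis .
    qed
    have \<rho>lim: "((\<lambda>\<epsilon>. \<rho> \<epsilon> /\<^sub>R \<epsilon>) \<longlongrightarrow> 0) (at 0)"
    proof -
      have c1: "((\<lambda>\<epsilon>. r \<epsilon> t /\<^sub>R \<epsilon>) \<longlongrightarrow> 0) (at 0)"
      proof (rule tendsto_norm_zero_cancel)
        have "((\<lambda>\<epsilon>. norm (r \<epsilon> t) / \<bar>\<epsilon>\<bar>) \<longlongrightarrow> 0) (at 0)" using r_small tc by blast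
        moreover have "(\<lambda>\<epsilon>. norm (r \<epsilon> t /\<^sub>R \<epsilon>)) = (\<lambda>\<epsilon>. norm (r \<epsilon> t) / \<bar>\<epsilon>\<bar>)"
          by (rule ext) (simp add: divide_inverse mult.commute)
        ultimately show "((\<lambda>\<epsilon>. norm (r \<epsilon> t /\<^sub>R \<epsilon>)) \<longlongrightarrow> 0) (at 0)" by simp
      qed
      have c2: "((\<lambda>\<epsilon>. ?gB (r \<epsilon>) t /\<^sub>R \<epsilon>) \<longlongrightarrow> 0) (at 0)"
      proof (intro vec_tendstoI)
        fix k i
        have "((\<lambda>\<epsilon>. Bop kern (\<alpha> $ i) a b (p1 $ i) (q1 $ i) i (\<lambda>s. r \<epsilon> s $ k) t / \<epsilon>) \<longlongrightarrow> 0) (at 0)"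
          using rB_small tc by blast
        moreover have "(\<lambda>\<epsilon>. (?gB (r \<epsilon>) t /\<^sub>R \<epsilon>) $ k $ i)
            = (\<lambda>\<epsilon>. Bop kern (\<alpha> $ i) a b (p1 $ i) (q1 $ i) i (\<lambda>s. r \<epsilon> s $ k) t / \<epsilon>)"
          by (rule ext) (simp add: gradB_def divide_inverse mult.commute)
        ultimately show "((\<lambda>\<epsilon>. (?gB (r \<epsilon>) t /\<^sub>R \<epsilon>) $ k $ i) \<longlongrightarrow> 0 $ k $ i) (at 0)" by simp
      qed
      have c3: "((\<lambda>\<epsilon>. ?gK (r \<epsilon>) t /\<^sub>R \<epsilon>) \<longlongrightarrow> 0) (at 0)"
      proof (intro vec_tendstoI)
        fix k i
        have "((\<lambda>\<epsilon>. Kop kern (\<beta> $ i) a b (p2 $ i) (q2 $ i) i (\<lambda>s. r \<epsilon> s $ k) t / \<epsilon>) \<longlongrightarrow> 0) (at 0)"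
          using rK_small tc by blast
        moreover have "(\<lambda>\<epsilon>. (?gK (r \<epsilon>) t /\<^sub>R \<epsilon>) $ k $ i)
            = (\<lambda>\<epsilon>. Kop kern (\<beta> $ i) a b (p2 $ i) (q2 $ i) i (\<lambda>s. r \<epsilon> s $ k) t / \<epsilon>)"
          by (rule ext) (simp add: gradK_def divide_inverse mult.commute)
        ultimately show "((\<lambda>\<epsilon>. (?gK (r \<epsilon>) t /\<^sub>R \<epsilon>) $ k $ i) \<longlongrightarrow> 0 $ k $ i) (at 0)" by simp
      qed
      have "((\<lambda>\<epsilon>. ((0::real^'n), r \<epsilon> t /\<^sub>R \<epsilon>, ?gB (r \<epsilon>) t /\<^sub>R \<epsilon>, ?gK (r \<epsilon>) t /\<^sub>R \<epsilon>)) \<longlongrightarrow> (0, 0, 0, 0)) (at 0)"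
        by (intro tendsto_Pair c1 c2 c3 tendsto_const)
      then show ?thesis by (simp add: \<rho>_def zero_prod_def)
    qed
    have \<phi>d: "(\<phi> has_derivative (\<lambda>h. h *\<^sub>R D\<xi>)) (at 0)"
      unfolding has_derivative_at_within
    proof (intro conjI bounded_linear_scaleR_left)
      have "((\<lambda>y. norm (\<rho> y /\<^sub>R y)) \<longlongrightarrow> 0) (at 0)" using tendsto_norm_zero[OF \<rho>lim] .
      moreover have "eventually (\<lambda>y. norm (\<rho> y /\<^sub>R y) = norm (((\<phi> y - \<phi> 0) - (y - 0) *\<^sub>R D\<xi>) /\<^sub>R norm (y - 0))) (at (0::real))"
        unfolding eventually_at_filter by (rule always_eventually) (simp add: \<phi>_def)
      ultimately have "((\<lambda>y. norm (((\<phi> y - \<phi> 0) - (y - 0) *\<^sub>R D\<xi>) /\<^sub>R norm (y - 0))) \<longlongrightarrow> 0) (at 0)"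
        by (rule Lim_transform_eventually)
      then show "((\<lambda>y. ((\<phi> y - \<phi> 0) - (y - 0) *\<^sub>R D\<xi>) /\<^sub>R norm (y - 0)) \<longlongrightarrow> 0) (at 0)"
        by (rule tendsto_norm_zero_cancel)
    qed
    have "((\<lambda>\<epsilon>. ?G (\<phi> \<epsilon>)) has_derivative (\<lambda>h. L (h *\<^sub>R D\<xi>))) (at 0)"
      using has_derivative_compose[OF \<phi>d, of ?G L] hd by (simp add: \<phi>_def)
    moreover have "(\<lambda>h. L (h *\<^sub>R D\<xi>)) = (*) (L D\<xi>)"
      by (rule ext) (simp add: linear_scale[OF linL])
    ultimately have "((\<lambda>\<epsilon>. ?G (\<phi> \<epsilon>)) has_field_derivative L D\<xi>) (at 0)"
      unfolding has_field_derivative_def by simp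
    then have lim: "((\<lambda>\<epsilon>. (?G (\<phi> \<epsilon>) - ?G (\<phi> 0)) / (\<epsilon> - 0)) \<longlongrightarrow> L D\<xi>) (at 0)"
      using has_field_derivative_iff[of "\<lambda>\<epsilon>. ?G (\<phi> \<epsilon>)" "L D\<xi>" 0 UNIV] by simp
    have ev: "eventually (\<lambda>\<epsilon>. (?G (\<phi> \<epsilon>) - ?G (\<phi> 0)) / (\<epsilon> - 0) = 0) (at 0)"
    proof -
      have p0: "\<phi> 0 = z0" by (simp add: \<phi>_def)
      have "\<forall>\<epsilon>\<in>UNIV. \<epsilon> \<noteq> 0 \<and> dist \<epsilon> 0 < \<delta> \<longrightarrow> (?G (\<phi> \<epsilon>) - ?G (\<phi> 0)) / (\<epsilon> - 0) = 0"
      proof (intro ballI impI)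
        fix \<epsilon> :: real assume "\<epsilon> \<noteq> 0 \<and> dist \<epsilon> 0 < \<delta>"
        then have "?G (\<phi> \<epsilon>) = ?G z0" using G\<phi> by (simp add: dist_real_def)
        then show "(?G (\<phi> \<epsilon>) - ?G (\<phi> 0)) / (\<epsilon> - 0) = 0" unfolding p0 by simp
      qed
      then show ?thesis unfolding eventually_at using \<delta> by blast
    qed
    have "((\<lambda>\<epsilon>. 0) \<longlongrightarrow> L D\<xi>) (at (0::real))"
      using Lim_transform_eventually[OF lim ev] .
    then have LD0: "L D\<xi> = 0" by (simp add: tendsto_const_iff)
    have dx: "Feval (dFx F k) kern \<alpha> \<beta> a b p1 q1 p2 q2 u t = L (0, axis k 1, 0, 0)" for k
      using dFx_eq[OF hd[unfolded z0_def]] by (simp add: Feval_def)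
    have dv: "Feval (dFv F k i) kern \<alpha> \<beta> a b p1 q1 p2 q2 u t = L (0, 0, axis k (axis i 1), 0)" for k i
      using dFv_eq[OF hd[unfolded z0_def]] by (simp add: Feval_def)
    have dw: "Feval (dFw F k i) kern \<alpha> \<beta> a b p1 q1 p2 q2 u t = L (0, 0, 0, axis k (axis i 1))" for k i
      using dFw_eq[OF hd[unfolded z0_def]] by (simp add: Feval_def)
    have l0: "(\<Sum>k\<in>UNIV. \<xi> t (u t) $ k * Feval (dFx F k) kern \<alpha> \<beta> a b p1 q1 p2 q2 u t)
        + (\<Sum>k\<in>UNIV. \<Sum>i\<in>UNIV. Bop kern (\<alpha> $ i) a b (p1 $ i) (q1 $ i) i (\<lambda>s. \<xi> s (u s) $ k) t
              * Feval (dFv F k i) kern \<alpha> \<beta> a b p1 q1 p2 q2 u t)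
        + (\<Sum>k\<in>UNIV. \<Sum>i\<in>UNIV. Kop kern (\<beta> $ i) a b (p2 $ i) (q2 $ i) i (\<lambda>s. \<xi> s (u s) $ k) t
              * Feval (dFw F k i) kern \<alpha> \<beta> a b p1 q1 p2 q2 u t) = 0"
      using LD0 L_decomp[OF linL, of "?xh t" "?gB ?xh t" "?gK ?xh t"]
      by (simp add: D\<xi>_def dx dv dw gradB_def gradK_def)
    have el: "\<forall>k. (\<Sum>i\<in>UNIV. - Aop kern (\<alpha> $ i) a b (q1 $ i) (p1 $ i) i
                       (Feval (dFv F k i) kern \<alpha> \<beta> a b p1 q1 p2 q2 u) t
                   + Kop kern (\<beta> $ i) a b (q2 $ i) (p2 $ i) i
                       (Feval (dFw F k i) kern \<alpha> \<beta> a b p1 q1 p2 q2 u) t)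
       + Feval (dFx F k) kern \<alpha> \<beta> a b p1 q1 p2 q2 u t = 0" using EL t by blast
    show "(\<Sum>k\<in>UNIV. \<Sum>i\<in>UNIV.
        Dop kern (\<alpha> $ i) a b (p1 $ i) (q1 $ i) i (\<lambda>s. \<xi> s (u s) $ k)
            (Feval (dFv F k i) kern \<alpha> \<beta> a b p1 q1 p2 q2 u) t
      + Iop kern (\<beta> $ i) a b (p2 $ i) (q2 $ i) i (\<lambda>s. \<xi> s (u s) $ k)
            (Feval (dFw F k i) kern \<alpha> \<beta> a b p1 q1 p2 q2 u) t) = 0"
      unfolding Dop_def Iop_def
      by (rule final_alg[OF el l0])
  qed
qed

end
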